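(* There exists an absolute constant $m_0$ such that the following holds for every integer $m\ge m_0$. Let $q=2^m$ and $a,b\in\mathbb{F}_{q^2}$, and let $P_1(x)=ax^{q+1}+bx^{2(q+1)}\in\mathbb{F}_{q^2}[x]$. Then $P_1$ is a planar function on $\mathbb{F}_{q^2}$ if and only if $$(a,b)=\Big(\frac{s^q}{1+s^{1+q}},\,0\Big)$$ for some $s\in\mathbb{F}_{q^2}$ with $1+s^{1+q}\neq 0$.
   Context: A function $f:\mathbb{F}_{2^n}\to\mathbb{F}_{2^n}$ is called planar if for every $a\in\mathbb{F}_{2^n}^{*}$ the map $x\mapsto f(x+a)+f(x)+ax$ is a permutation of $\mathbb{F}_{2^n}$. *)

theory Defs
  imports "HOL-Algebra.Algebra"
begin

text \<open>A function f on the field R (intended to be of characteristic 2) is planar if for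
every nonzero a the map x |-> f(x+a) + f(x) + a x is a permutation of the field.\<close>
definition planar :: "('a, 'b) ring_scheme \<Rightarrow> ('a \<Rightarrow> 'a) \<Rightarrow> bool" where
  "planar R f \<longleftrightarrow>
     (\<forall>a \<in> carrier R - {\<zero>\<^bsub>R\<^esub>}.
        bij_betw (\<lambda>x. f (x \<oplus>\<^bsub>R\<^esub> a) \<oplus>\<^bsub>R\<^esub> f x \<oplus>\<^bsub>R\<^esub> (a \<otimes>\<^bsub>R\<^esub> x))
                 (carrier R) (carrier R))"

end

theory Submission
  imports Defs
begin

lemma dc: "(a::nat) * c dvd b * c \<Longrightarrow> 0 < c \<Longrightarrow> a dvd b"
  by (metis mult.commute nat_mult_dvd_cancel_disj neq0_conv)

locale F2q = field R for R (structure) +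
  fixes m :: nat
  assumes fin: "finite (carrier R)" and crd: "card (carrier R) = 2^(2*m)" and m2: "2 \<le> m"
begin

lemma two_pow: "add_pow R ((2::nat)^n) \<one> = (add_pow R (2::nat) \<one>) [^] n"
proof (induction n)
  case 0 then show ?case by simp
next
  case (Suc n)
  have "add_pow R ((2::nat)^Suc n) \<one> = add_pow R (2::nat) (add_pow R ((2::nat)^n) \<one>)"
    using add.nat_pow_pow[of \<one> "2::nat" "2^n"] add.nat_pow_pow[of \<one> "2^n" "2::nat"] by (simp add: mult.commute)
  also have "\<dots> = add_pow R (2::nat) (\<one> \<otimes> (add_pow R ((2::nat)^n) \<one>))" by simp
  also have "\<dots> = (add_pow R (2::nat) \<one>) \<otimes> (add_pow R ((2::nat)^n) \<one>)"
    using add_pow_ldistr[of \<one> "add_pow R ((2::nat)^n) \<one>" 2] by simp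
  also have "\<dots> = (add_pow R (2::nat) \<one>) [^] Suc n" using Suc
    by (simp add: m_comm)
  finally show ?case .
qed

lemma pow_zero_imp: "x \<in> carrier R \<Longrightarrow> x [^] (n::nat) = \<zero> \<Longrightarrow> x = \<zero>"
  by (induction n) (auto simp: integral_iff m_comm)

lemma char2: "\<one> \<oplus> \<one> = \<zero>"
proof -
  have "order (add_monoid R) = 2^(2*m)" using crd by (simp add: order_def)
  then have "add_pow R ((2::nat)^(2*m)) \<one> = \<zero>"
    using add.pow_order_eq_1[of \<one>] by simp
  then have "(add_pow R (2::nat) \<one>) = \<zero>" using two_pow pow_zero_imp by simp
  then show ?thesis by (simp add: numeral_2_eq_2)
qed

lemma add_self: "x \<in> carrier R \<Longrightarrow> x \<oplus> x = \<zero>"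
proof -
  assume x: "x \<in> carrier R"
  have "x \<oplus> x = (\<one> \<oplus> \<one>) \<otimes> x" using x by algebra
  then show ?thesis using char2 x by simp
qed

lemma add_eq0_iff: "x \<in> carrier R \<Longrightarrow> y \<in> carrier R \<Longrightarrow> (x \<oplus> y = \<zero>) = (x = y)"
proof
  assume x: "x \<in> carrier R" and y: "y \<in> carrier R" and e: "x \<oplus> y = \<zero>"
  have "x = (x \<oplus> y) \<oplus> y" using x y add_self[OF y] by (simp add: a_assoc)
  then show "x = y" using e y by simp
next
  assume "x \<in> carrier R" "x = y" then show "x \<oplus> y = \<zero>" using add_self by simp
qed

lemma add_move: "x \<in> carrier R \<Longrightarrow> y \<in> carrier R \<Longrightarrow> z \<in> carrier R \<Longrightarrow> (x \<oplus> y = z) = (x = z \<oplus> y)"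
proof -
  assume x: "x \<in> carrier R" and y: "y \<in> carrier R" and z: "z \<in> carrier R"
  have "(x \<oplus> y = z) = (x \<oplus> y \<oplus> z = \<zero>)" using add_eq0_iff x y z by simp
  also have "x \<oplus> y \<oplus> z = x \<oplus> (z \<oplus> y)" using x y z by algebra
  also have "(\<dots> = \<zero>) = (x = z \<oplus> y)" using add_eq0_iff x y z by simp
  finally show ?thesis .
qed

lemma add_lcancel: "d \<in> carrier R \<Longrightarrow> x \<in> carrier R \<Longrightarrow> y \<in> carrier R \<Longrightarrow> d \<oplus> x = d \<oplus> y \<Longrightarrow> x = y"
proof -
  assume d: "d \<in> carrier R" and x: "x \<in> carrier R" and y: "y \<in> carrier R" and e: "d \<oplus> x = d \<oplus> y"
  have "(d \<oplus> x) \<oplus> (d \<oplus> y) = (x \<oplus> y) \<oplus> (d \<oplus> d)" using d x y by algebra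
  then have "x \<oplus> y = \<zero>" using e add_self d x y by simp
  then show "x = y" using add_eq0_iff x y by simp
qed

lemma sq_add: "x \<in> carrier R \<Longrightarrow> y \<in> carrier R \<Longrightarrow> (x \<oplus> y) [^] (2::nat) = x [^] (2::nat) \<oplus> y [^] (2::nat)"
proof -
  assume x: "x \<in> carrier R" and y: "y \<in> carrier R"
  have "(x \<oplus> y) [^] (2::nat) = x \<otimes> x \<oplus> y \<otimes> y \<oplus> (x \<otimes> y \<oplus> x \<otimes> y)"
    using x y by (simp add: numeral_2_eq_2) algebra
  also have "\<dots> = x [^] (2::nat) \<oplus> y [^] (2::nat)"
    using x y add_self[of "x \<otimes> y"] by (simp add: numeral_2_eq_2)
  finally show ?thesis .
qed

lemma frob2k: "x \<in> carrier R \<Longrightarrow> y \<in> carrier R \<Longrightarrow> (x \<oplus> y) [^] ((2::nat)^k) = x [^] ((2::nat)^k) \<oplus> y [^] ((2::nat)^k)"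
proof (induction k)
  case 0 then show ?case by simp
next
  case (Suc k)
  have e: "\<And>z. z \<in> carrier R \<Longrightarrow> z [^] ((2::nat)^Suc k) = (z [^] ((2::nat)^k)) [^] (2::nat)"
    by (simp add: nat_pow_pow mult.commute)
  have "(x \<oplus> y) [^] ((2::nat)^Suc k) = ((x \<oplus> y) [^] ((2::nat)^k)) [^] (2::nat)"
    using Suc by (intro e) simp
  also have "\<dots> = (x [^] ((2::nat)^k)) [^] (2::nat) \<oplus> (y [^] ((2::nat)^k)) [^] (2::nat)"
    using Suc by (simp add: sq_add)
  also have "\<dots> = x [^] ((2::nat)^Suc k) \<oplus> y [^] ((2::nat)^Suc k)"
    using Suc.prems by (simp only: e)
  finally show ?case .
qed

abbreviation q where "q \<equiv> (2::nat)^m"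

lemma q_ge4: "4 \<le> q"
proof -
  have "(2::nat)^2 \<le> 2^m" using m2 by (intro power_increasing) auto
  then show ?thesis by simp
qed

lemma frob: "x \<in> carrier R \<Longrightarrow> y \<in> carrier R \<Longrightarrow> (x \<oplus> y) [^] q = x [^] q \<oplus> y [^] q"
  by (rule frob2k)

lemma qq: "(2::nat)^(2*m) = q * q"
  by (simp add: power_add[symmetric] mult_2)

lemma card_q: "card (carrier R) = q * q" using crd qq by simp

lemma fermat1: "x \<in> carrier R \<Longrightarrow> x \<noteq> \<zero> \<Longrightarrow> x [^] (q * q - 1) = \<one>"
proof -
  assume x: "x \<in> carrier R" "x \<noteq> \<zero>"
  interpret G: group "Multiplicative_Group.mult_of R" rewrites
      "([^]\<^bsub>Multiplicative_Group.mult_of R\<^esub>) = (([^]) :: _ \<Rightarrow> nat \<Rightarrow> _)" and "\<one>\<^bsub>Multiplicative_Group.mult_of R\<^esub> = \<one>"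
    by (rule field_mult_group) (simp_all add: fun_eq_iff nat_pow_def)
  have "order (Multiplicative_Group.mult_of R) = q * q - 1" using order_mult_of[OF fin] card_q by (simp add: order_def)
  then show ?thesis using G.pow_order_eq_1[of x] x by simp
qed

lemma fermat: "x \<in> carrier R \<Longrightarrow> x [^] (q * q) = x"
proof -
  assume x: "x \<in> carrier R"
  have qpos: "q * q \<ge> 1" using q_ge4 by simp
  show ?thesis
  proof (cases "x = \<zero>")
    case True then show ?thesis using qpos by (simp add: nat_pow_zero)
  next
    case False
    have "x [^] (q * q) = x [^] (q * q - 1) \<otimes> x" using x qpos
      by (metis Suc_diff_1 less_le_trans nat_pow_Suc zero_less_one)
    then show ?thesis using fermat1[OF x False] x by simp
  qed
qed

lemma frob_frob: "x \<in> carrier R \<Longrightarrow> (x [^] q) [^] q = x"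
  using fermat by (simp add: nat_pow_pow)

lemma pow_mult_distrib: "x \<in> carrier R \<Longrightarrow> y \<in> carrier R \<Longrightarrow> (x \<otimes> y) [^] (n::nat) = x [^] n \<otimes> y [^] n"
  by (simp add: nat_pow_distrib)

lemma inv_pow: "x \<in> carrier R \<Longrightarrow> x \<noteq> \<zero> \<Longrightarrow> inv x [^] (n::nat) = inv (x [^] n)"
proof -
  assume x: "x \<in> carrier R" "x \<noteq> \<zero>"
  have xi: "inv x \<in> carrier R" "x \<otimes> inv x = \<one>" using x field_Units by auto
  have "x [^] n \<otimes> inv x [^] n = \<one>" using xi x by (simp add: nat_pow_distrib[symmetric])
  then show ?thesis using xi x by (metis comm_inv_char nat_pow_closed)
qed

lemma one_pow: "\<one> [^] (n::nat) = \<one>" by simp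

definition Tr where "Tr x = x \<oplus> x [^] q"
definition Nm where "Nm x = x \<otimes> x [^] q"

lemma Tr_closed[simp]: "x \<in> carrier R \<Longrightarrow> Tr x \<in> carrier R" by (simp add: Tr_def)
lemma Nm_closed[simp]: "x \<in> carrier R \<Longrightarrow> Nm x \<in> carrier R" by (simp add: Nm_def)

lemma Tr_q: "x \<in> carrier R \<Longrightarrow> Tr x [^] q = Tr x"
  by (simp add: Tr_def frob frob_frob a_comm)

lemma Nm_q: "x \<in> carrier R \<Longrightarrow> Nm x [^] q = Nm x"
  by (simp add: Nm_def nat_pow_distrib frob_frob m_comm)

lemma Tr_add: "x \<in> carrier R \<Longrightarrow> y \<in> carrier R \<Longrightarrow> Tr (x \<oplus> y) = Tr x \<oplus> Tr y"
proof -
  assume x: "x \<in> carrier R" and y: "y \<in> carrier R"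
  have "x [^] q \<in> carrier R" "y [^] q \<in> carrier R" using x y by auto
  then show ?thesis unfolding Tr_def using x y by (simp add: frob a_ac)
qed

lemma Tr_smul: "k \<in> carrier R \<Longrightarrow> x \<in> carrier R \<Longrightarrow> k [^] q = k \<Longrightarrow> Tr (k \<otimes> x) = k \<otimes> Tr x"
  unfolding Tr_def by (simp add: nat_pow_distrib r_distr)

lemma Tr_zero[simp]: "Tr \<zero> = \<zero>"
  using q_ge4 by (simp add: Tr_def nat_pow_zero)

lemma pow_q1: "x \<in> carrier R \<Longrightarrow> x [^] (q + 1) = Nm x"
  by (simp add: Nm_def m_comm)

lemma pow_1q: "x \<in> carrier R \<Longrightarrow> x [^] (1 + q) = Nm x"
  using pow_q1 by (simp add: add.commute)

lemma gen:
  obtains g where "g \<in> carrier R" "g \<noteq> \<zero>" "\<And>n::nat. (g [^] n = \<one>) = ((q*q-1) dvd n)"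
    "\<And>x. x \<in> carrier R \<Longrightarrow> x \<noteq> \<zero> \<Longrightarrow> \<exists>i::nat. x = g [^] i"
proof -
  interpret G: group "Multiplicative_Group.mult_of R" rewrites
      "([^]\<^bsub>Multiplicative_Group.mult_of R\<^esub>) = (([^]) :: _ \<Rightarrow> nat \<Rightarrow> _)" and "\<one>\<^bsub>Multiplicative_Group.mult_of R\<^esub> = \<one>"
    by (rule field_mult_group) (simp_all add: fun_eq_iff nat_pow_def)
  obtain g where g: "g \<in> carrier R - {\<zero>}" and gen: "carrier R - {\<zero>} = {g[^]i | i::nat. i \<in> UNIV}"
    using finite_field_mult_group_has_gen[OF fin] by auto
  have fin': "finite (carrier (Multiplicative_Group.mult_of R))" using fin by simp
  have g': "g \<in> carrier (Multiplicative_Group.mult_of R)" using g by simp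
  have ordg1: "G.ord g \<ge> 1" using G.ord_ge_1[OF fin' g'] .
  have "carrier R - {\<zero>} = {g[^]x | x. x \<in> {0 .. G.ord g - 1}}"
    using gen G.ord_elems[OF fin' g'] by simp
  also have "\<dots> = (\<lambda>x. g [^] x) ` {0 .. G.ord g - 1}" by auto
  finally have "card (carrier R - {\<zero>}) \<le> card {0 .. G.ord g - 1}"
    by (metis card_image_le finite_atLeastAtMost)
  also have "\<dots> = G.ord g" using ordg1 by simp
  finally have le1: "card (carrier R - {\<zero>}) \<le> G.ord g" .
  have ord_mo: "order (Multiplicative_Group.mult_of R) = q * q - 1"
    using order_mult_of[OF fin] card_q by (simp add: order_def)
  have "card (carrier R - {\<zero>}) = q * q - 1" using card_q fin by (simp add: card_Diff_singleton)
  moreover have "G.ord g \<le> q * q - 1" using G.ord_le_group_order[OF fin' g'] ord_mo by simp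
  ultimately have ordg: "G.ord g = q * q - 1" using le1 by simp
  show ?thesis
  proof
    show "g \<in> carrier R" "g \<noteq> \<zero>" using g by auto
    show "\<And>n::nat. (g [^] n = \<one>) = ((q*q-1) dvd n)" using G.pow_eq_id[OF g'] ordg by simp
    show "\<And>x. x \<in> carrier R \<Longrightarrow> x \<noteq> \<zero> \<Longrightarrow> \<exists>i::nat. x = g [^] i" using gen by auto
  qed
qed

lemma qq1: "q * q - 1 = (q - 1) * (q + 1)"
  using q_ge4 by (simp add: algebra_simps)

lemma nz_pow: "x \<in> carrier R \<Longrightarrow> x \<noteq> \<zero> \<Longrightarrow> x [^] (n::nat) \<noteq> \<zero>"
  using pow_zero_imp by blast

lemma norm_pow: "c \<in> carrier R \<Longrightarrow> c \<noteq> \<zero> \<Longrightarrow> Nm (c [^] (q - 1)) = \<one>"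
proof -
  assume c: "c \<in> carrier R" "c \<noteq> \<zero>"
  have e: "(q - 1) + (q - 1) * q = q * q - 1" using q_ge4 by (simp add: algebra_simps)
  have "Nm (c [^] (q - 1)) = c [^] ((q - 1) + (q - 1) * q)"
    unfolding Nm_def using c by (simp add: nat_pow_pow nat_pow_mult)
  also have "\<dots> = \<one>" using e fermat1[OF c] by simp
  finally show ?thesis .
qed

lemma norm1_root:
  assumes x: "x \<in> carrier R" "x \<noteq> \<zero>" "Nm x = \<one>"
  shows "\<exists>c\<in>carrier R. c \<noteq> \<zero> \<and> x = c [^] (q - 1)"
proof -
  obtain g where g: "g \<in> carrier R" "g \<noteq> \<zero>" "\<And>n::nat. (g [^] n = \<one>) = ((q*q-1) dvd n)"
    "\<And>x. x \<in> carrier R \<Longrightarrow> x \<noteq> \<zero> \<Longrightarrow> \<exists>i::nat. x = g [^] i" by (rule gen) blast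
  obtain i :: nat where i: "x = g [^] i" using g(4)[OF x(1) x(2)] by blast
  have "g [^] (i * (q + 1)) = x [^] (q + 1)" using i g(1) by (simp only: nat_pow_pow)
  then have "g [^] (i * (q + 1)) = \<one>" using x pow_q1 by simp
  then have "(q - 1) * (q + 1) dvd i * (q + 1)" using g(3) qq1 by simp
  then have "(q - 1) dvd i" by (rule dc) simp
  then obtain j where j: "i = j * (q - 1)" by (auto simp: dvd_def mult.commute)
  show ?thesis
  proof (intro bexI conjI)
    show "g [^] j \<in> carrier R" using g by simp
    show "g [^] j \<noteq> \<zero>" using g nz_pow by simp
    show "x = (g [^] j) [^] (q - 1)" using i j g by (simp add: nat_pow_pow)
  qed
qed

lemma nonfixed: "\<exists>y\<in>carrier R. y [^] q \<noteq> y"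
proof -
  obtain g where g: "g \<in> carrier R" "g \<noteq> \<zero>" "\<And>n::nat. (g [^] n = \<one>) = ((q*q-1) dvd n)"
    by (rule gen) blast
  have "g [^] q \<noteq> g"
  proof
    assume h: "g [^] q = g"
    have "g [^] q = g [^] (q - 1) \<otimes> g" using q_ge4 g
      by (metis Suc_diff_1 less_le_trans nat_pow_Suc zero_less_numeral)
    then have "g [^] (q - 1) \<otimes> g = \<one> \<otimes> g" using h g by simp
    then have "g [^] (q - 1) = \<one>" using g m_rcancel by (metis nat_pow_closed one_closed)
    then have "(q*q-1) dvd (q - 1)" using g by simp
    moreover have "q * 1 < q * q" using q_ge4 by (intro mult_strict_left_mono) auto
    then have "0 < q - 1" "q - 1 < q * q - 1" using q_ge4 by linarith+
    ultimately show False by (meson dvd_imp_le not_le)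
  qed
  then show ?thesis using g by blast
qed

lemma four:
  obtains c :: "nat \<Rightarrow> 'a" where "\<And>j. c j \<in> carrier R" "\<And>j. c j \<noteq> \<zero>"
    "\<And>i j. i < j \<Longrightarrow> j \<le> 3 \<Longrightarrow> c i [^] (q - 1) \<noteq> c j [^] (q - 1)"
proof -
  obtain g where g: "g \<in> carrier R" "g \<noteq> \<zero>" "\<And>n::nat. (g [^] n = \<one>) = ((q*q-1) dvd n)"
    by (rule gen) blast
  show ?thesis
  proof
    show "\<And>j::nat. g [^] j \<in> carrier R" using g by simp
    show "\<And>j::nat. g [^] j \<noteq> \<zero>" using g nz_pow by simp
    fix i j :: nat assume ij: "i < j" "j \<le> 3"
    show "(g [^] i) [^] (q - 1) \<noteq> (g [^] j) [^] (q - 1)"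
    proof
      assume h: "(g [^] i) [^] (q - 1) = (g [^] j) [^] (q - 1)"
      have e: "j * (q - 1) = i * (q - 1) + (j - i) * (q - 1)" using ij
        by (metis add_mult_distrib le_add_diff_inverse less_imp_le)
      have "(g [^] j) [^] (q - 1) = g [^] (j * (q - 1))" using g by (simp only: nat_pow_pow)
      also have "\<dots> = g [^] (i * (q - 1) + (j - i) * (q - 1))" by (simp only: e[symmetric])
      also have "\<dots> = g [^] (i * (q - 1)) \<otimes> g [^] ((j - i) * (q - 1))"
        by (rule nat_pow_mult[symmetric, OF g(1)])
      finally have "(g [^] j) [^] (q - 1) = g [^] (i * (q - 1)) \<otimes> g [^] ((j - i) * (q - 1))" .
      then have "g [^] (i * (q - 1)) \<otimes> \<one> = g [^] (i * (q - 1)) \<otimes> g [^] ((j - i) * (q - 1))"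
        using h g by (simp add: nat_pow_pow)
      then have "g [^] ((j - i) * (q - 1)) = \<one>"
        using g m_lcancel nz_pow by (metis nat_pow_closed one_closed)
      then have "(q - 1) * (q + 1) dvd (j - i) * (q - 1)" using g(3) qq1 by simp
      then have "(q + 1) * (q - 1) dvd (j - i) * (q - 1)" by (simp only: mult.commute)
      then have "(q + 1) dvd (j - i)" by (rule dc) (use q_ge4 in simp)
      then have "q + 1 \<le> j - i" using ij by (simp add: dvd_imp_le)
      then show False using ij q_ge4 by simp
    qed
  qed
qed

definition fab where "fab a b x = a \<otimes> x [^] (q + 1) \<oplus> b \<otimes> x [^] (2 * (q + 1))"

lemma fab_closed[simp]: "a \<in> carrier R \<Longrightarrow> b \<in> carrier R \<Longrightarrow> x \<in> carrier R \<Longrightarrow> fab a b x \<in> carrier R"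
  by (simp add: fab_def)

lemma sq_eq: "x \<in> carrier R \<Longrightarrow> x [^] (2::nat) = x \<otimes> x"
  by (simp add: numeral_2_eq_2)

lemma Dlem:
  assumes a: "a \<in> carrier R" and b: "b \<in> carrier R" and c: "c \<in> carrier R" and x: "x \<in> carrier R"
  shows "fab a b (x \<oplus> c) \<oplus> fab a b x \<oplus> c \<otimes> x
       = fab a b c \<oplus> (a \<otimes> Tr (c [^] q \<otimes> x) \<oplus> b \<otimes> Tr (c [^] q \<otimes> x) [^] (2::nat) \<oplus> c \<otimes> x)"
proof -
  have xq: "x [^] q \<in> carrier R" and cq: "c [^] q \<in> carrier R" using x c by auto
  define t where "t = Tr (c [^] q \<otimes> x)"
  have t: "t = c [^] q \<otimes> x \<oplus> c \<otimes> x [^] q"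
    unfolding t_def Tr_def using c x by (simp add: nat_pow_distrib frob_frob)
  have tc: "t \<in> carrier R" using t xq cq x c by simp
  have "(x \<oplus> c) [^] (q + 1) = (x [^] q \<oplus> c [^] q) \<otimes> (x \<oplus> c)"
    using x c by (simp add: frob)
  also have "\<dots> = Nm x \<oplus> t \<oplus> Nm c" unfolding t Nm_def using x c xq cq by algebra
  finally have e1: "(x \<oplus> c) [^] (q + 1) = Nm x \<oplus> t \<oplus> Nm c" .
  have e2: "(x \<oplus> c) [^] (2 * (q + 1)) = (Nm x) [^] (2::nat) \<oplus> t [^] (2::nat) \<oplus> (Nm c) [^] (2::nat)"
  proof -
    have xc: "x \<oplus> c \<in> carrier R" using x c by simp
    have "(x \<oplus> c) [^] (2 * (q + 1)) = ((x \<oplus> c) [^] (q + 1)) [^] (2::nat)"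
      using nat_pow_pow[OF xc, of "q+1" 2] by (simp only: mult.commute)
    then show ?thesis using e1 x c tc by (simp add: sq_add)
  qed
  have e3: "y [^] (2 * (q + 1)) = (Nm y) [^] (2::nat)" if y: "y \<in> carrier R" for y
  proof -
    have "y [^] (2 * (q + 1)) = (y [^] (q + 1)) [^] (2::nat)"
      using nat_pow_pow[OF y, of "q+1" 2] by (simp only: mult.commute)
    then show ?thesis by (simp only: pow_q1[OF y])
  qed
  have A: "Nm x \<in> carrier R" "Nm c \<in> carrier R" "Nm x [^] (2::nat) \<in> carrier R"
    "Nm c [^] (2::nat) \<in> carrier R" "t [^] (2::nat) \<in> carrier R" using x c tc by auto
  have f1: "fab a b (x \<oplus> c) = a \<otimes> (Nm x \<oplus> t \<oplus> Nm c) \<oplus> b \<otimes> ((Nm x) [^] (2::nat) \<oplus> t [^] (2::nat) \<oplus> (Nm c) [^] (2::nat))"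
    unfolding fab_def by (simp only: e1 e2)
  have f2: "fab a b y = a \<otimes> Nm y \<oplus> b \<otimes> (Nm y) [^] (2::nat)" if y: "y \<in> carrier R" for y
    unfolding fab_def by (simp only: pow_q1[OF y] e3[OF y])
  have "fab a b (x \<oplus> c) \<oplus> fab a b x \<oplus> c \<otimes> x
     = a \<otimes> (Nm x \<oplus> t \<oplus> Nm c) \<oplus> b \<otimes> ((Nm x) [^] (2::nat) \<oplus> t [^] (2::nat) \<oplus> (Nm c) [^] (2::nat))
       \<oplus> (a \<otimes> Nm x \<oplus> b \<otimes> (Nm x) [^] (2::nat)) \<oplus> c \<otimes> x"
    by (simp only: f1 f2[OF x])
  also have "\<dots> = (a \<otimes> Nm c \<oplus> b \<otimes> (Nm c) [^] (2::nat)) \<oplus> (a \<otimes> t \<oplus> b \<otimes> t [^] (2::nat) \<oplus> c \<otimes> x)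
       \<oplus> ((a \<otimes> Nm x \<oplus> a \<otimes> Nm x) \<oplus> (b \<otimes> (Nm x) [^] (2::nat) \<oplus> b \<otimes> (Nm x) [^] (2::nat)))"
    using a b c x A tc by algebra
  also have "\<dots> = fab a b c \<oplus> (a \<otimes> t \<oplus> b \<otimes> t [^] (2::nat) \<oplus> c \<otimes> x)"
    using a b c x A tc by (simp add: add_self f2)
  finally show ?thesis unfolding t_def .
qed

lemma notplanar:
  assumes a: "a \<in> carrier R" and b: "b \<in> carrier R" and c: "c \<in> carrier R" "c \<noteq> \<zero>"
    and k: "k \<in> carrier R" "k \<noteq> \<zero>" "k [^] q = k"
    and T: "Tr (c [^] (q - 1) \<otimes> (a \<oplus> b \<otimes> k)) = \<one>"
  shows "\<not> planar R (fab a b)"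
proof
  assume P: "planar R (fab a b)"
  let ?D = "\<lambda>x. fab a b (x \<oplus> c) \<oplus> fab a b x \<oplus> c \<otimes> x"
  have inj: "inj_on ?D (carrier R)" using P c unfolding planar_def bij_betw_def by auto
  define v where "v = c [^] (q - 1)"
  define z where "z = a \<oplus> b \<otimes> k"
  define x where "x = k \<otimes> z \<otimes> inv c"
  have ci: "inv c \<in> carrier R" "c \<otimes> inv c = \<one>" using c field_Units by auto
  have vz: "v \<in> carrier R" "z \<in> carrier R" unfolding v_def z_def using a b c k by auto
  have xc: "x \<in> carrier R" unfolding x_def using vz k ci by simp
  have cq: "c [^] q = v \<otimes> c" unfolding v_def using c q_ge4
    by (metis Suc_diff_1 less_le_trans nat_pow_Suc zero_less_numeral)
  have cx: "c \<otimes> x = k \<otimes> z"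
  proof -
    have "c \<otimes> x = (c \<otimes> inv c) \<otimes> (k \<otimes> z)" unfolding x_def using c ci(1) vz k by algebra
    then show ?thesis using ci vz k by (metis l_one m_closed)
  qed
  have p: "c [^] q \<otimes> x = k \<otimes> (v \<otimes> z)"
  proof -
    have "c [^] q \<otimes> x = v \<otimes> (c \<otimes> x)" unfolding cq using c vz xc by algebra
    also have "\<dots> = k \<otimes> (v \<otimes> z)" unfolding cx using vz k by algebra
    finally show ?thesis .
  qed
  have t: "Tr (c [^] q \<otimes> x) = k" unfolding p using Tr_smul[of k "v \<otimes> z"] k vz T
    by (simp add: v_def z_def)
  have xnz: "x \<noteq> \<zero>"
  proof
    assume "x = \<zero>"
    then have "Tr (c [^] q \<otimes> x) = \<zero>" using c by simp
    then show False using t k by simp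
  qed
  have "?D x = fab a b c \<oplus> (a \<otimes> k \<oplus> b \<otimes> k [^] (2::nat) \<oplus> k \<otimes> z)"
    using Dlem[OF a b c(1) xc] t cx by simp
  also have "a \<otimes> k \<oplus> b \<otimes> k [^] (2::nat) \<oplus> k \<otimes> z = (a \<otimes> k \<oplus> a \<otimes> k) \<oplus> (b \<otimes> (k \<otimes> k) \<oplus> b \<otimes> (k \<otimes> k))"
    unfolding z_def using a b k by (simp add: sq_eq) algebra
  also have "\<dots> = \<zero>" using a b k by (simp add: add_self)
  finally have Dx: "?D x = fab a b c \<oplus> \<zero>" .
  have "?D \<zero> = fab a b c \<oplus> (a \<otimes> Tr (c [^] q \<otimes> \<zero>) \<oplus> b \<otimes> Tr (c [^] q \<otimes> \<zero>) [^] (2::nat) \<oplus> c \<otimes> \<zero>)"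
    using Dlem[OF a b c(1)] by simp
  also have "\<dots> = fab a b c \<oplus> \<zero>" using a b c by (simp add: sq_eq)
  finally have "?D x = ?D \<zero>" using Dx by simp
  then have "x = \<zero>" using inj xc by (auto dest: inj_onD)
  then show False using xnz by simp
qed

lemma CL:
  assumes v: "v \<in> carrier R" "Nm v = \<one>" and s: "s \<in> carrier R"
    and D: "\<one> \<oplus> Nm s \<noteq> \<zero>"
    and T: "Tr (v \<otimes> (s [^] q \<otimes> inv (\<one> \<oplus> Nm s))) = \<one>"
  shows False
proof -
  define D where "D = \<one> \<oplus> Nm s"
  have Dc: "D \<in> carrier R" "D \<noteq> \<zero>" using D s by (auto simp: D_def)
  have Di: "inv D \<in> carrier R" "D \<otimes> inv D = \<one>" "inv D \<otimes> D = \<one>" using Dc field_Units by auto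
  have Dq: "D [^] q = D" unfolding D_def using s by (simp add: frob Nm_q)
  have iDq: "inv D [^] q = inv D" using inv_pow[OF Dc] Dq by simp
  have vq: "v [^] q \<in> carrier R" and sq: "s [^] q \<in> carrier R" using v s by auto
  have "Tr (v \<otimes> (s [^] q \<otimes> inv D)) = (v \<otimes> s [^] q \<oplus> v [^] q \<otimes> s) \<otimes> inv D"
  proof -
    have "(v \<otimes> (s [^] q \<otimes> inv D)) [^] q = v [^] q \<otimes> (s \<otimes> inv D)"
      using v s Di by (simp add: nat_pow_distrib frob_frob iDq)
    then show ?thesis unfolding Tr_def using v s Di vq sq by (simp add: m_ac l_distr r_distr)
  qed
  then have e0: "(v \<otimes> s [^] q \<oplus> v [^] q \<otimes> s) \<otimes> inv D = \<one>" using T by (simp add: D_def)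
  have E: "v \<otimes> s [^] q \<oplus> v [^] q \<otimes> s = D"
  proof -
    have "v \<otimes> s [^] q \<oplus> v [^] q \<otimes> s = ((v \<otimes> s [^] q \<oplus> v [^] q \<otimes> s) \<otimes> inv D) \<otimes> D"
      using v s vq sq Di(1) Dc(1) Di(3) by (simp add: m_assoc)
    then show ?thesis using e0 Dc by simp
  qed
  have vv: "v \<otimes> v [^] q = \<one>" using v by (simp add: Nm_def)
  have E2: "v \<otimes> v \<otimes> s [^] q \<oplus> s = v \<otimes> (\<one> \<oplus> s \<otimes> s [^] q)"
  proof -
    have "v \<otimes> v \<otimes> s [^] q \<oplus> (v \<otimes> v [^] q) \<otimes> s = v \<otimes> (v \<otimes> s [^] q \<oplus> v [^] q \<otimes> s)"
      using v vq s sq by algebra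
    then show ?thesis using E vv s by (simp add: D_def Nm_def)
  qed
  have Z: "(v \<oplus> s) \<otimes> (v \<otimes> s [^] q \<oplus> \<one>) = \<zero>"
  proof -
    have "(v \<oplus> s) \<otimes> (v \<otimes> s [^] q \<oplus> \<one>) = (v \<otimes> v \<otimes> s [^] q \<oplus> s) \<oplus> v \<otimes> (\<one> \<oplus> s \<otimes> s [^] q)"
      using v(1) s sq by algebra
    then show ?thesis using E2 add_self v s sq by simp
  qed
  have "Nm s = \<one>"
  proof (cases "v \<oplus> s = \<zero>")
    case True
    then have "v = s" using add_eq0_iff v s by simp
    then show ?thesis using v by simp
  next
    case False
    then have "v \<otimes> s [^] q \<oplus> \<one> = \<zero>" using Z integral v s sq by blast
    then have h: "v \<otimes> s [^] q = \<one>" using add_eq0_iff v s sq by simp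
    then have "(v \<otimes> s [^] q) [^] q = \<one>" by simp
    then have h2: "v [^] q \<otimes> s = \<one>" using v s by (simp add: nat_pow_distrib frob_frob)
    have "(v \<otimes> v [^] q) \<otimes> (s \<otimes> s [^] q) = (v \<otimes> s [^] q) \<otimes> (v [^] q \<otimes> s)"
      using v vq s sq by algebra
    then show ?thesis using h h2 vv s by (simp add: Nm_def)
  qed
  then show False using D char2 by simp
qed

lemma planar_b0:
  assumes s: "s \<in> carrier R" and D: "\<one> \<oplus> Nm s \<noteq> \<zero>"
  shows "planar R (fab (s [^] q \<otimes> inv (\<one> \<oplus> Nm s)) \<zero>)"
  unfolding planar_def
proof
  define a where "a = s [^] q \<otimes> inv (\<one> \<oplus> Nm s)"
  have ac: "a \<in> carrier R" unfolding a_def using s D field_Units by auto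
  fix c assume c': "c \<in> carrier R - {\<zero>}"
  then have c: "c \<in> carrier R" "c \<noteq> \<zero>" by auto
  let ?D = "\<lambda>x. fab a \<zero> (x \<oplus> c) \<oplus> fab a \<zero> x \<oplus> c \<otimes> x"
  define L where "L x = a \<otimes> Tr (c [^] q \<otimes> x) \<oplus> c \<otimes> x" for x
  have Lc: "L x \<in> carrier R" if "x \<in> carrier R" for x unfolding L_def using that ac c by simp
  have DL: "?D x = fab a \<zero> c \<oplus> L x" if x: "x \<in> carrier R" for x
    using Dlem[OF ac zero_closed c(1) x] x c ac by (simp add: L_def)
  have Ladd: "L (x \<oplus> y) = L x \<oplus> L y" if "x \<in> carrier R" "y \<in> carrier R" for x y
  proof -
    have "c [^] q \<otimes> (x \<oplus> y) = c [^] q \<otimes> x \<oplus> c [^] q \<otimes> y" using that c by (simp add: r_distr)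
    then have "Tr (c [^] q \<otimes> (x \<oplus> y)) = Tr (c [^] q \<otimes> x) \<oplus> Tr (c [^] q \<otimes> y)"
      using that c by (simp add: Tr_add)
    then show ?thesis unfolding L_def using that c ac
      by (simp add: r_distr a_ac)
  qed
  have L0: "z = \<zero>" if z: "z \<in> carrier R" "L z = \<zero>" for z
  proof (rule ccontr)
    assume zn: "z \<noteq> \<zero>"
    define \<tau> where "\<tau> = Tr (c [^] q \<otimes> z)"
    have tc: "\<tau> \<in> carrier R" unfolding \<tau>_def using z c by simp
    have at: "a \<otimes> \<tau> = c \<otimes> z" using z(2) add_eq0_iff[of "a \<otimes> \<tau>" "c \<otimes> z"] ac tc z c
      by (simp add: L_def \<tau>_def)
    have tn: "\<tau> \<noteq> \<zero>"
    proof
      assume "\<tau> = \<zero>"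
      then have "c \<otimes> z = \<zero>" using at ac by simp
      then show False using integral c z zn by blast
    qed
    define v where "v = c [^] (q - 1)"
    have vc: "v \<in> carrier R" unfolding v_def using c by simp
    have cq: "c [^] q = v \<otimes> c" unfolding v_def using c q_ge4
      by (metis Suc_diff_1 less_le_trans nat_pow_Suc zero_less_numeral)
    have "c [^] q \<otimes> z = \<tau> \<otimes> (v \<otimes> a)"
    proof -
      have "c [^] q \<otimes> z = v \<otimes> (c \<otimes> z)" unfolding cq using vc c z by algebra
      also have "\<dots> = v \<otimes> (a \<otimes> \<tau>)" using at by simp
      also have "\<dots> = \<tau> \<otimes> (v \<otimes> a)" using vc ac tc by algebra
      finally show ?thesis .
    qed
    then have "\<tau> = \<tau> \<otimes> Tr (v \<otimes> a)"
      using Tr_smul[of \<tau> "v \<otimes> a"] tc vc ac Tr_q[of "c [^] q \<otimes> z"] z c by (simp add: \<tau>_def)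
    then have "\<tau> \<otimes> \<one> = \<tau> \<otimes> Tr (v \<otimes> a)" using tc by simp
    then have "Tr (v \<otimes> a) = \<one>" using m_lcancel[OF tn tc] vc ac by simp
    moreover have "Nm v = \<one>" unfolding v_def by (rule norm_pow[OF c])
    ultimately show False using CL[OF vc _ s D] by (simp add: a_def)
  qed
  have inj: "inj_on ?D (carrier R)"
  proof (rule inj_onI)
    fix x y assume x: "x \<in> carrier R" and y: "y \<in> carrier R" and e: "?D x = ?D y"
    have "L x = L y" using e DL[OF x] DL[OF y] Lc x y ac c by simp
    then have "L (x \<oplus> y) = \<zero>" using Ladd x y add_self Lc by simp
    then have "x \<oplus> y = \<zero>" using L0 x y by simp
    then show "x = y" using add_eq0_iff x y by simp
  qed
  have sub: "?D ` carrier R \<subseteq> carrier R" using ac c by auto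
  show "bij_betw ?D (carrier R) (carrier R)"
    unfolding bij_betw_def using inj endo_inj_surj[OF fin sub inj] by simp
qed

lemma AS:
  assumes c: "c \<in> carrier R" "c [^] q = c"
  shows "\<exists>r\<in>carrier R. r \<otimes> r \<oplus> r = c"
proof -
  define h where "h r = r \<otimes> r \<oplus> r" for r
  define Fq where "Fq = {y \<in> carrier R. y [^] q = y}"
  have hc: "h r \<in> carrier R" if "r \<in> carrier R" for r using that by (simp add: h_def)
  have hadd: "h (x \<oplus> y) = h x \<oplus> h y" if "x \<in> carrier R" "y \<in> carrier R" for x y
  proof -
    have "h (x \<oplus> y) = (x \<otimes> x \<oplus> x) \<oplus> (y \<otimes> y \<oplus> y) \<oplus> (x \<otimes> y \<oplus> x \<otimes> y)"
      unfolding h_def using that by algebra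
    then show ?thesis using that add_self[of "x \<otimes> y"] by (simp add: h_def)
  qed
  have hzero: "r = \<zero> \<or> r = \<one>" if r: "r \<in> carrier R" "h r = \<zero>" for r
  proof -
    have "h r = r \<otimes> (r \<oplus> \<one>)" unfolding h_def using r by algebra
    then have "r = \<zero> \<or> r \<oplus> \<one> = \<zero>" using r integral by simp
    then show ?thesis using add_eq0_iff r by auto
  qed
  have hq: "h r [^] q = h (r [^] q)" if "r \<in> carrier R" for r
    unfolding h_def using that by (simp add: frob nat_pow_distrib)
  have h1: "h \<one> = \<zero>" unfolding h_def using char2 by simp
  have Fq_add: "x \<oplus> y \<in> Fq" if "x \<in> Fq" "y \<in> Fq" for x y using that by (simp add: Fq_def frob)
  have one_Fq: "\<one> \<in> Fq" by (simp add: Fq_def)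
  have hFq: "h r \<in> Fq" if "r \<in> Fq" for r using that hq hc by (simp add: Fq_def)
  have Fqc: "Fq \<subseteq> carrier R" by (auto simp: Fq_def)
  have finFq: "finite Fq" using fin Fqc finite_subset by blast
  have fib: "{r \<in> Fq. h r = h r0} = {r0, r0 \<oplus> \<one>}" if r0: "r0 \<in> Fq" for r0
  proof
    have r0c: "r0 \<in> carrier R" using r0 Fqc by auto
    show "{r \<in> Fq. h r = h r0} \<subseteq> {r0, r0 \<oplus> \<one>}"
    proof
      fix r assume "r \<in> {r \<in> Fq. h r = h r0}"
      then have r: "r \<in> carrier R" "h r = h r0" using Fqc by auto
      have "h (r \<oplus> r0) = \<zero>" using hadd[OF r(1) r0c] r add_self hc r0c by simp
      then have "r \<oplus> r0 = \<zero> \<or> r \<oplus> r0 = \<one>" using hzero r r0c by simp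
      then have "r = r0 \<or> r = \<one> \<oplus> r0" using add_eq0_iff add_move r r0c by auto
      then show "r \<in> {r0, r0 \<oplus> \<one>}" using r0c by (auto simp: a_comm)
    qed
    show "{r0, r0 \<oplus> \<one>} \<subseteq> {r \<in> Fq. h r = h r0}"
      using r0 Fq_add[OF r0 one_Fq] hadd[OF r0c one_closed] h1 hc r0c by auto
  qed
  have card_fib: "card {r \<in> Fq. h r = h r0} = 2" if r0: "r0 \<in> Fq" for r0
  proof -
    have r0c: "r0 \<in> carrier R" using r0 Fqc by auto
    have "r0 \<noteq> r0 \<oplus> \<one>" using r0c by simp
    then show ?thesis using fib[OF r0] by simp
  qed
  define H where "H = h ` Fq"
  have finH: "finite H" unfolding H_def using finFq by simp
  have HFq: "H \<subseteq> Fq" unfolding H_def using hFq by auto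
  have cardFq: "card Fq = 2 * card H"
  proof -
    have U: "Fq = (\<Union>y\<in>H. {r \<in> Fq. h r = y})" unfolding H_def by auto
    have "card (\<Union>y\<in>H. {r \<in> Fq. h r = y}) = (\<Sum>y\<in>H. card {r \<in> Fq. h r = y})"
      by (rule card_UN_disjoint) (use finH finFq in auto)
    also have "\<dots> = (\<Sum>y\<in>H. 2)" unfolding H_def
      by (rule sum.cong) (auto simp: card_fib)
    also have "\<dots> = 2 * card H" by simp
    finally show ?thesis using U by simp
  qed
  obtain y0 where y0: "y0 \<in> carrier R" "y0 [^] q \<noteq> y0" using nonfixed by blast
  define u where "u = y0 [^] q \<oplus> y0"
  have uc: "u \<in> carrier R" "u \<noteq> \<zero>" unfolding u_def using y0 add_eq0_iff by auto
  have ui: "inv u \<in> carrier R" "u \<otimes> inv u = \<one>" using uc field_Units by auto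
  have uq: "u [^] q = u" unfolding u_def using y0 by (simp add: frob frob_frob a_comm)
  define \<theta> where "\<theta> = y0 \<otimes> inv u"
  have thc: "\<theta> \<in> carrier R" unfolding \<theta>_def using y0 ui by simp
  have thq: "\<theta> [^] q = y0 [^] q \<otimes> inv u"
    unfolding \<theta>_def using y0 ui uc inv_pow[OF uc, of q] uq by (simp add: nat_pow_distrib)
  have "\<theta> [^] q \<oplus> \<theta> = y0 [^] q \<otimes> inv u \<oplus> y0 \<otimes> inv u"
    by (simp only: thq) (simp only: \<theta>_def)
  also have "\<dots> = (y0 [^] q \<oplus> y0) \<otimes> inv u" using y0 ui by (simp add: l_distr)
  finally have "\<theta> [^] q \<oplus> \<theta> = u \<otimes> inv u" by (simp only: u_def)
  then have "\<theta> [^] q \<oplus> \<theta> = \<one>" using ui by simp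
  then have thq1: "\<theta> [^] q = \<one> \<oplus> \<theta>" using add_move thc by simp
  define d where "d = h \<theta>"
  have dc: "d \<in> carrier R" unfolding d_def using thc hc by simp
  have dFq: "d \<in> Fq"
  proof -
    have "d [^] q = h (\<one> \<oplus> \<theta>)" unfolding d_def using hq thc thq1 by simp
    also have "\<dots> = d" unfolding d_def using hadd thc h1 hc by simp
    finally show ?thesis using dc by (simp add: Fq_def)
  qed
  have thnot: False if r: "r \<in> Fq" "h (\<theta> \<oplus> r) = \<zero>" for r
  proof -
    have rc: "r \<in> carrier R" using r Fqc by auto
    have "\<theta> \<oplus> r = \<zero> \<or> \<theta> \<oplus> r = \<one>" using hzero r thc rc by simp
    then have "\<theta> = r \<or> \<theta> = \<one> \<oplus> r" using add_eq0_iff add_move thc rc by auto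
    then have "\<theta> \<in> Fq" using r Fq_add[OF one_Fq r(1)] by auto
    then have "\<theta> [^] q = \<theta>" by (simp add: Fq_def)
    then have "\<theta> = \<one> \<oplus> \<theta>" using thq1 by simp
    then show False using thc by (simp add: a_comm)
  qed
  define dH where "dH = (\<lambda>z. d \<oplus> z) ` H"
  have dHFq: "dH \<subseteq> Fq" unfolding dH_def using HFq dFq Fq_add by auto
  have disj: "H \<inter> dH = {}"
  proof (rule ccontr)
    assume "H \<inter> dH \<noteq> {}"
    then obtain r1 r2 where r: "r1 \<in> Fq" "r2 \<in> Fq" "h r2 = d \<oplus> h r1"
      unfolding H_def dH_def by auto
    have rc: "r1 \<in> carrier R" "r2 \<in> carrier R" using r Fqc by auto
    have "h (\<theta> \<oplus> (r1 \<oplus> r2)) = (d \<oplus> h r1) \<oplus> h r2"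
      unfolding d_def using hadd thc rc hc by (simp add: a_assoc)
    also have "\<dots> = \<zero>" using r(3) add_self hc rc dc by simp
    finally show False using thnot[OF Fq_add[OF r(1) r(2)]] by simp
  qed
  have "inj_on (\<lambda>z. d \<oplus> z) H"
  proof (rule inj_onI)
    fix x y assume "x \<in> H" "y \<in> H" "d \<oplus> x = d \<oplus> y"
    then show "x = y" using add_lcancel[of d x y] HFq Fqc dc by blast
  qed
  then have "card dH = card H" unfolding dH_def by (rule card_image)
  then have "card (H \<union> dH) = card Fq" using cardFq card_Un_disjoint[OF finH _ disj] finH
    unfolding dH_def by simp
  then have HU: "H \<union> dH = Fq" using card_subset_eq[OF finFq] HFq dHFq by auto
  have "c \<in> Fq" using c by (simp add: Fq_def)
  then have "c \<in> H \<or> c \<in> dH" using HU by auto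
  then show ?thesis
  proof
    assume "c \<in> H"
    then obtain r where "r \<in> Fq" "c = h r" unfolding H_def by auto
    then show ?thesis using Fqc by (auto simp: h_def)
  next
    assume "c \<in> dH"
    then obtain r where r: "r \<in> Fq" "c = d \<oplus> h r" unfolding dH_def H_def by auto
    have rc: "r \<in> carrier R" using r Fqc by auto
    have "c = h (\<theta> \<oplus> r)" using r hadd thc rc by (simp add: d_def)
    then show ?thesis using thc rc by (auto simp: h_def)
  qed
qed

lemma b0_onlyif:
  assumes a: "a \<in> carrier R" and P: "planar R (fab a \<zero>)"
  shows "\<exists>s\<in>carrier R. \<one> \<oplus> Nm s \<noteq> \<zero> \<and> a = s [^] q \<otimes> inv (\<one> \<oplus> Nm s)"
proof (cases "a = \<zero>")
  case True
  have "\<one> \<oplus> Nm \<zero> \<noteq> \<zero>" "a = \<zero> [^] q \<otimes> inv (\<one> \<oplus> Nm \<zero>)"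
    using True q_ge4 by (auto simp: Nm_def nat_pow_zero)
  then show ?thesis by blast
next
  case False
  have ai: "inv a \<in> carrier R" "a \<otimes> inv a = \<one>" using a False field_Units by auto
  have aq: "a [^] q \<in> carrier R" using a by simp
  obtain r where r: "r \<in> carrier R" "r \<otimes> r \<oplus> r = Nm a" using AS[of "Nm a"] a Nm_q by auto
  define s where "s = r \<otimes> inv a"
  have sc: "s \<in> carrier R" unfolding s_def using r ai by simp
  have E1: "a \<otimes> s \<otimes> s \<oplus> s = a [^] q"
  proof -
    have "a \<otimes> s \<otimes> s \<oplus> s = (a \<otimes> inv a) \<otimes> (r \<otimes> r \<otimes> inv a) \<oplus> r \<otimes> inv a"
      unfolding s_def using a r ai(1) by algebra
    also have "\<dots> = (r \<otimes> r \<oplus> r) \<otimes> inv a" using ai r(1) by (simp add: l_distr)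
    also have "\<dots> = (a \<otimes> inv a) \<otimes> a [^] q" using r(2) a ai(1) by (simp add: Nm_def m_ac)
    also have "\<dots> = a [^] q" using ai a by simp
    finally show ?thesis .
  qed
  have snz: "s \<noteq> \<zero>"
  proof
    assume "s = \<zero>"
    then have "a [^] q = \<zero>" using E1 a by simp
    then show False using pow_zero_imp a False by blast
  qed
  show ?thesis
  proof (cases "Nm s = \<one>")
    case True
    obtain c where c: "c \<in> carrier R" "c \<noteq> \<zero>" "s = c [^] (q - 1)" using norm1_root[OF sc snz True] by blast
    have sq: "s [^] q \<in> carrier R" using sc by simp
    have E1': "a \<otimes> s \<otimes> s \<oplus> a [^] q = s"
      using E1 add_move[of "a \<otimes> s \<otimes> s" s "a [^] q"] add_move[of "a \<otimes> s \<otimes> s" "a [^] q" s] a sc aq by (simp add: a_comm)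
    have "s \<otimes> Tr (s \<otimes> a) = a \<otimes> s \<otimes> s \<oplus> (s \<otimes> s [^] q) \<otimes> a [^] q"
      unfolding Tr_def using sc a aq sq by (simp add: nat_pow_distrib r_distr m_ac)
    also have "\<dots> = s \<otimes> \<one>" using True E1' sc a aq by (simp add: Nm_def)
    finally have "s \<otimes> Tr (s \<otimes> a) = s \<otimes> \<one>" .
    then have "Tr (s \<otimes> a) = \<one>" using m_lcancel[OF snz sc, of "Tr (s \<otimes> a)" \<one>] sc a by simp
    then have "Tr (c [^] (q - 1) \<otimes> (a \<oplus> \<zero> \<otimes> \<one>)) = \<one>" using c a by simp
    then have "\<not> planar R (fab a \<zero>)" using notplanar[OF a zero_closed c(1) c(2) one_closed] by simp
    then show ?thesis using P by simp
  next
    case False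
    define D where "D = \<one> \<oplus> Nm s"
    have Dc: "D \<in> carrier R" "D \<noteq> \<zero>" unfolding D_def using False add_eq0_iff sc by auto
    have Di: "inv D \<in> carrier R" "D \<otimes> inv D = \<one>" using Dc field_Units by auto
    define v where "v = s [^] q"
    have vc: "v \<in> carrier R" "v \<noteq> \<zero>" unfolding v_def using sc snz nz_pow by auto
    define W where "W = inv v"
    have W: "W \<in> carrier R" "v \<otimes> W = \<one>" unfolding W_def using vc field_Units by auto
    have E2: "a [^] q \<otimes> v \<otimes> v \<oplus> v = a"
    proof -
      have "(a \<otimes> s \<otimes> s \<oplus> s) [^] q = a [^] q \<otimes> v \<otimes> v \<oplus> v"
        unfolding v_def using a sc by (simp add: frob nat_pow_distrib)
      then show ?thesis using E1 frob_frob[OF a] by simp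
    qed
    have E2': "a \<otimes> W \<otimes> W \<oplus> W = a [^] q"
    proof -
      have "a \<otimes> W \<otimes> W = (a [^] q \<otimes> v \<otimes> v \<oplus> v) \<otimes> W \<otimes> W" using E2 by simp
      also have "\<dots> = a [^] q \<otimes> (v \<otimes> W) \<otimes> (v \<otimes> W) \<oplus> (v \<otimes> W) \<otimes> W"
        using aq vc(1) W(1) by algebra
      also have "\<dots> = a [^] q \<oplus> W" using W aq by simp
      finally have "a \<otimes> W \<otimes> W = a [^] q \<oplus> W" .
      then show ?thesis using add_move[of "a \<otimes> W \<otimes> W" W "a [^] q"] a W aq by simp
    qed
    have Z: "(W \<oplus> s) \<otimes> (a \<otimes> (W \<oplus> s) \<oplus> \<one>) = \<zero>"
    proof -
      have "(W \<oplus> s) \<otimes> (a \<otimes> (W \<oplus> s) \<oplus> \<one>) = (a \<otimes> W \<otimes> W \<oplus> W) \<oplus> (a \<otimes> s \<otimes> s \<oplus> s) \<oplus> (a \<otimes> W \<otimes> s \<oplus> a \<otimes> W \<otimes> s)"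
        using W(1) sc a by algebra
      then show ?thesis using E1 E2' add_self a W sc aq by simp
    qed
    have "W \<oplus> s \<noteq> \<zero>"
    proof
      assume "W \<oplus> s = \<zero>"
      then have "W = s" using add_eq0_iff W sc by simp
      then have "Nm s = \<one>" using W by (simp add: Nm_def v_def m_comm sc)
      then show False using False by simp
    qed
    then have "a \<otimes> (W \<oplus> s) \<oplus> \<one> = \<zero>" using Z integral W sc a by blast
    then have h: "a \<otimes> (W \<oplus> s) = \<one>" using add_eq0_iff W sc a by simp
    have "a \<otimes> D = (a \<otimes> (W \<oplus> s)) \<otimes> v"
    proof -
      have "(a \<otimes> (W \<oplus> s)) \<otimes> v = a \<otimes> (v \<otimes> W \<oplus> s \<otimes> v)" using a W(1) sc vc(1) by algebra
      then show ?thesis using W(2) by (simp add: D_def Nm_def v_def)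
    qed
    then have aD: "a \<otimes> D = v" using h vc by simp
    have "a = (a \<otimes> D) \<otimes> inv D" using a Dc Di by (simp add: m_assoc)
    then have "a = s [^] q \<otimes> inv D" using aD by (simp add: v_def)
    then show ?thesis using sc Dc unfolding D_def by blast
  qed
qed

lemma B1:
  assumes v: "v \<in> carrier R" "Nm v = \<one>" and w: "w \<in> carrier R" "Nm w = \<one>"
    and b: "b \<in> carrier R" "b \<noteq> \<zero>" and tv: "Tr (v \<otimes> b) = \<zero>" and tw: "Tr (w \<otimes> b) = \<zero>"
  shows "v = w"
proof -
  have key: "y \<otimes> y \<otimes> b = b [^] q" if y: "y \<in> carrier R" "Nm y = \<one>" "Tr (y \<otimes> b) = \<zero>" for y
  proof -
    have "y \<otimes> b \<oplus> y [^] q \<otimes> b [^] q = \<zero>" using y b by (simp add: Tr_def nat_pow_distrib)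
    then have e: "y \<otimes> b = y [^] q \<otimes> b [^] q" using add_eq0_iff y b by simp
    have "y \<otimes> y \<otimes> b = y \<otimes> (y \<otimes> b)" using y b by (simp add: m_assoc)
    also have "\<dots> = (y \<otimes> y [^] q) \<otimes> b [^] q" using e y b by (simp add: m_assoc)
    finally show ?thesis using y b by (simp add: Nm_def)
  qed
  have "(v \<otimes> v) \<otimes> b = (w \<otimes> w) \<otimes> b" using key[OF v tv] key[OF w tw] by simp
  then have "v \<otimes> v = w \<otimes> w" using m_rcancel[OF b(2) b(1)] v w by simp
  then have "(v \<oplus> w) [^] (2::nat) = \<zero>" using sq_add[OF v(1) w(1)] v w add_self by (simp add: sq_eq)
  then have "v \<oplus> w = \<zero>" using pow_zero_imp v w by blast
  then show ?thesis using add_eq0_iff v w by simp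
qed

lemma B2key:
  assumes a: "a \<in> carrier R" and v: "v \<in> carrier R" "Nm v = \<one>" and t: "Tr (v \<otimes> a) = \<one>"
  shows "a \<otimes> v \<otimes> v \<oplus> a [^] q = v"
proof -
  have vq: "v [^] q \<in> carrier R" "a [^] q \<in> carrier R" using v a by auto
  have "v \<otimes> Tr (v \<otimes> a) = a \<otimes> v \<otimes> v \<oplus> (v \<otimes> v [^] q) \<otimes> a [^] q"
    unfolding Tr_def using v a vq by (simp add: nat_pow_distrib r_distr m_ac)
  then show ?thesis using t v a vq by (simp add: Nm_def)
qed

lemma B2pair:
  assumes a: "a \<in> carrier R" and v: "v \<in> carrier R" "Nm v = \<one>" "Tr (v \<otimes> a) = \<one>"
    and w: "w \<in> carrier R" "Nm w = \<one>" "Tr (w \<otimes> a) = \<one>" and vw: "v \<noteq> w"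
  shows "a \<otimes> (v \<oplus> w) = \<one>"
proof -
  have kv: "a \<otimes> v \<otimes> v \<oplus> a [^] q = v" using B2key[OF a v(1,2,3)] .
  have kw: "a \<otimes> w \<otimes> w \<oplus> a [^] q = w" using B2key[OF a w(1,2,3)] .
  have aq: "a [^] q \<in> carrier R" using a by simp
  have "(v \<oplus> w) \<otimes> (a \<otimes> (v \<oplus> w) \<oplus> \<one>) \<oplus> (a [^] q \<oplus> a [^] q)
      = (a \<otimes> v \<otimes> v \<oplus> a [^] q) \<oplus> (a \<otimes> w \<otimes> w \<oplus> a [^] q) \<oplus> (v \<oplus> w) \<oplus> (a \<otimes> v \<otimes> w \<oplus> a \<otimes> v \<otimes> w)"
    using a v(1) w(1) aq by algebra
  then have "(v \<oplus> w) \<otimes> (a \<otimes> (v \<oplus> w) \<oplus> \<one>) = (v \<oplus> w) \<oplus> (v \<oplus> w)"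
    using kv kw add_self a v w aq by simp
  then have "(v \<oplus> w) \<otimes> (a \<otimes> (v \<oplus> w) \<oplus> \<one>) = \<zero>" using add_self v w by simp
  moreover have "v \<oplus> w \<noteq> \<zero>" using add_eq0_iff v w vw by simp
  ultimately have "a \<otimes> (v \<oplus> w) \<oplus> \<one> = \<zero>" using integral a v w by blast
  then show ?thesis using add_eq0_iff a v w by simp
qed

lemma B2:
  assumes a: "a \<in> carrier R" and v: "v \<in> carrier R" "Nm v = \<one>" "Tr (v \<otimes> a) = \<one>"
    and w: "w \<in> carrier R" "Nm w = \<one>" "Tr (w \<otimes> a) = \<one>"
    and z: "z \<in> carrier R" "Nm z = \<one>" "Tr (z \<otimes> a) = \<one>"
    and vw: "v \<noteq> w" and vz: "v \<noteq> z"
  shows "w = z"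
proof -
  have an: "a \<noteq> \<zero>" using v(3) v(1) by auto
  have "a \<otimes> (v \<oplus> w) = a \<otimes> (v \<oplus> z)" using B2pair[OF a v w vw] B2pair[OF a v z vz] by simp
  then have "v \<oplus> w = v \<oplus> z" using m_lcancel[OF an a] v w z by simp
  then show ?thesis using add_lcancel v w z by blast
qed

lemma bnz:
  assumes a: "a \<in> carrier R" and b: "b \<in> carrier R" "b \<noteq> \<zero>"
  shows "\<not> planar R (fab a b)"
proof -
  obtain c :: "nat \<Rightarrow> 'a" where c: "\<And>j. c j \<in> carrier R" "\<And>j. c j \<noteq> \<zero>"
    and dst: "\<And>i j. i < j \<Longrightarrow> j \<le> 3 \<Longrightarrow> c i [^] (q - 1) \<noteq> c j [^] (q - 1)" by (rule four) blast
  define v where "v j = c j [^] (q - 1)" for j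
  have vc: "v j \<in> carrier R" "Nm (v j) = \<one>" for j unfolding v_def using c norm_pow by auto
  define P1 where "P1 j = (Tr (v j \<otimes> b) = \<zero>)" for j
  define P2 where "P2 j = (Tr (v j \<otimes> a) = \<one>)" for j
  have b1: "v i = v j" if "P1 i" "P1 j" for i j using B1[OF vc(1)[of i] vc(2)[of i] vc(1)[of j] vc(2)[of j] b] that unfolding P1_def by blast
  have b2: "v j = v k" if "P2 i" "P2 j" "P2 k" "v i \<noteq> v j" "v i \<noteq> v k" for i j k
    using B2[OF a vc(1)[of i] vc(2)[of i] _ vc(1)[of j] vc(2)[of j] _ vc(1)[of k] vc(2)[of k]] that
    unfolding P2_def by blast
  have d: "v 0 \<noteq> v 1" "v 0 \<noteq> v 2" "v 0 \<noteq> v 3" "v 1 \<noteq> v 2" "v 1 \<noteq> v 3" "v 2 \<noteq> v 3"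
    unfolding v_def using dst by auto
  have "\<exists>j. \<not> P1 j \<and> \<not> P2 j"
  proof (rule ccontr)
    assume "\<not> (\<exists>j. \<not> P1 j \<and> \<not> P2 j)"
    then have h: "P1 j \<or> P2 j" for j by blast
    show False
    proof (cases "P1 0")
      case True
      then have "\<not> P1 1" "\<not> P1 2" "\<not> P1 3" using b1[of 0 1] b1[of 0 2] b1[of 0 3] d by auto
      then have "P2 1" "P2 2" "P2 3" using h by blast+
      then show False using b2[of 1 2 3] d by simp
    next
      case False
      then have p0: "P2 0" using h by blast
      show False
      proof (cases "P1 1")
        case True
        then have "\<not> P1 2" "\<not> P1 3" using b1[of 1 2] b1[of 1 3] d by auto
        then have "P2 2" "P2 3" using h by blast+
        then show False using b2[of 0 2 3] d p0 by simp
      next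
        case False
        then have p1: "P2 1" using h by blast
        have "P2 2 \<or> P2 3" using h[of 2] h[of 3] b1[of 2 3] d by auto
        then show False using b2[of 0 1 2] b2[of 0 1 3] d p0 p1 by auto
      qed
    qed
  qed
  then obtain j where j: "Tr (v j \<otimes> b) \<noteq> \<zero>" "Tr (v j \<otimes> a) \<noteq> \<one>" unfolding P1_def P2_def by blast
  define t where "t = Tr (v j \<otimes> a)"
  define u where "u = Tr (v j \<otimes> b)"
  have tc: "t \<in> carrier R" "t [^] q = t" unfolding t_def using vc a Tr_q by auto
  have uc: "u \<in> carrier R" "u \<noteq> \<zero>" "u [^] q = u" unfolding u_def using vc b j Tr_q by auto
  have ui: "inv u \<in> carrier R" "inv u \<otimes> u = \<one>" using uc field_Units by auto
  define k where "k = (\<one> \<oplus> t) \<otimes> inv u"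
  have kc: "k \<in> carrier R" unfolding k_def using tc ui by simp
  have t1: "\<one> \<oplus> t \<noteq> \<zero>" using add_eq0_iff[of \<one> t] tc j by (auto simp: t_def)
  have kn: "k \<noteq> \<zero>"
  proof
    assume "k = \<zero>"
    then have "\<one> \<oplus> t = \<zero> \<or> inv u = \<zero>" unfolding k_def using integral tc ui by simp
    then show False using t1 ui uc by auto
  qed
  have kq: "k [^] q = k" unfolding k_def using tc ui uc inv_pow[OF uc(1,2), of q]
    by (simp add: nat_pow_distrib frob)
  have ku: "k \<otimes> u = \<one> \<oplus> t" unfolding k_def using tc ui uc by (simp add: m_assoc)
  have "v j \<otimes> (a \<oplus> b \<otimes> k) = v j \<otimes> a \<oplus> k \<otimes> (v j \<otimes> b)" using vc a b kc by algebra
  then have "Tr (v j \<otimes> (a \<oplus> b \<otimes> k)) = t \<oplus> k \<otimes> u"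
    using Tr_add Tr_smul[OF kc _ kq] vc a b kc by (simp add: t_def u_def)
  also have "\<dots> = t \<oplus> (\<one> \<oplus> t)" using ku by simp
  also have "\<dots> = \<one> \<oplus> (t \<oplus> t)" using tc(1) by algebra
  also have "\<dots> = \<one>" using tc add_self by simp
  finally have T: "Tr (c j [^] (q - 1) \<otimes> (a \<oplus> b \<otimes> k)) = \<one>" by (simp add: v_def)
  show ?thesis using notplanar[OF a b(1) c(1) c(2) kc kn kq T] .
qed

end

theorem theorem1:
  shows "\<exists>m0::nat. \<forall>m::nat \<ge> m0. \<forall>R :: nat ring.
     field R \<and> finite (carrier R) \<and> card (carrier R) = (2::nat) ^ (2 * m) \<longrightarrow>
     (\<forall>a \<in> carrier R. \<forall>b \<in> carrier R.
        planar R (\<lambda>x. a \<otimes>\<^bsub>R\<^esub> x [^]\<^bsub>R\<^esub> ((2::nat) ^ m + 1)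
                      \<oplus>\<^bsub>R\<^esub> b \<otimes>\<^bsub>R\<^esub> x [^]\<^bsub>R\<^esub> (2 * ((2::nat) ^ m + 1)))
        \<longleftrightarrow>
        (\<exists>s \<in> carrier R.
           \<one>\<^bsub>R\<^esub> \<oplus>\<^bsub>R\<^esub> s [^]\<^bsub>R\<^esub> (1 + (2::nat) ^ m) \<noteq> \<zero>\<^bsub>R\<^esub> \<and>
           a = s [^]\<^bsub>R\<^esub> ((2::nat) ^ m) \<otimes>\<^bsub>R\<^esub>
                 inv\<^bsub>R\<^esub> (\<one>\<^bsub>R\<^esub> \<oplus>\<^bsub>R\<^esub> s [^]\<^bsub>R\<^esub> (1 + (2::nat) ^ m)) \<and>
           b = \<zero>\<^bsub>R\<^esub>))"
proof (intro exI[of _ 2] allI impI ballI)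
  fix m :: nat and R :: "nat ring" and a b
  assume m: "2 \<le> m" and H: "field R \<and> finite (carrier R) \<and> card (carrier R) = (2::nat) ^ (2 * m)"
    and a: "a \<in> carrier R" and b: "b \<in> carrier R"
  have "F2q R m" unfolding F2q_def F2q_axioms_def using H m by auto
  then interpret F: F2q R m .
  have fe: "(\<lambda>x. a \<otimes>\<^bsub>R\<^esub> x [^]\<^bsub>R\<^esub> ((2::nat) ^ m + 1)
                      \<oplus>\<^bsub>R\<^esub> b \<otimes>\<^bsub>R\<^esub> x [^]\<^bsub>R\<^esub> (2 * ((2::nat) ^ m + 1))) = F.fab a b"
    by (simp add: fun_eq_iff F.fab_def)
  have ne: "(\<exists>s \<in> carrier R.
           \<one>\<^bsub>R\<^esub> \<oplus>\<^bsub>R\<^esub> s [^]\<^bsub>R\<^esub> (1 + (2::nat) ^ m) \<noteq> \<zero>\<^bsub>R\<^esub> \<and>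
           a = s [^]\<^bsub>R\<^esub> ((2::nat) ^ m) \<otimes>\<^bsub>R\<^esub>
                 inv\<^bsub>R\<^esub> (\<one>\<^bsub>R\<^esub> \<oplus>\<^bsub>R\<^esub> s [^]\<^bsub>R\<^esub> (1 + (2::nat) ^ m)) \<and>
           b = \<zero>\<^bsub>R\<^esub>) \<longleftrightarrow>
        (\<exists>s \<in> carrier R. \<one>\<^bsub>R\<^esub> \<oplus>\<^bsub>R\<^esub> F.Nm s \<noteq> \<zero>\<^bsub>R\<^esub> \<and>
           a = s [^]\<^bsub>R\<^esub> ((2::nat) ^ m) \<otimes>\<^bsub>R\<^esub> inv\<^bsub>R\<^esub> (\<one>\<^bsub>R\<^esub> \<oplus>\<^bsub>R\<^esub> F.Nm s)) \<and> b = \<zero>\<^bsub>R\<^esub>"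
    using F.pow_1q by auto
  show "planar R (\<lambda>x. a \<otimes>\<^bsub>R\<^esub> x [^]\<^bsub>R\<^esub> ((2::nat) ^ m + 1)
                      \<oplus>\<^bsub>R\<^esub> b \<otimes>\<^bsub>R\<^esub> x [^]\<^bsub>R\<^esub> (2 * ((2::nat) ^ m + 1)))
        \<longleftrightarrow>
        (\<exists>s \<in> carrier R.
           \<one>\<^bsub>R\<^esub> \<oplus>\<^bsub>R\<^esub> s [^]\<^bsub>R\<^esub> (1 + (2::nat) ^ m) \<noteq> \<zero>\<^bsub>R\<^esub> \<and>
           a = s [^]\<^bsub>R\<^esub> ((2::nat) ^ m) \<otimes>\<^bsub>R\<^esub>
                 inv\<^bsub>R\<^esub> (\<one>\<^bsub>R\<^esub> \<oplus>\<^bsub>R\<^esub> s [^]\<^bsub>R\<^esub> (1 + (2::nat) ^ m)) \<and>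
           b = \<zero>\<^bsub>R\<^esub>)"
    unfolding fe ne
  proof (cases "b = \<zero>\<^bsub>R\<^esub>")
    case True
    show "planar R (F.fab a b) \<longleftrightarrow> (\<exists>s \<in> carrier R. \<one>\<^bsub>R\<^esub> \<oplus>\<^bsub>R\<^esub> F.Nm s \<noteq> \<zero>\<^bsub>R\<^esub> \<and>
           a = s [^]\<^bsub>R\<^esub> ((2::nat) ^ m) \<otimes>\<^bsub>R\<^esub> inv\<^bsub>R\<^esub> (\<one>\<^bsub>R\<^esub> \<oplus>\<^bsub>R\<^esub> F.Nm s)) \<and> b = \<zero>\<^bsub>R\<^esub>"
      using True F.b0_onlyif[OF a] F.planar_b0 by auto
  next
    case False
    then show "planar R (F.fab a b) \<longleftrightarrow> (\<exists>s \<in> carrier R. \<one>\<^bsub>R\<^esub> \<oplus>\<^bsub>R\<^esub> F.Nm s \<noteq> \<zero>\<^bsub>R\<^esub> \<and>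
           a = s [^]\<^bsub>R\<^esub> ((2::nat) ^ m) \<otimes>\<^bsub>R\<^esub> inv\<^bsub>R\<^esub> (\<one>\<^bsub>R\<^esub> \<oplus>\<^bsub>R\<^esub> F.Nm s)) \<and> b = \<zero>\<^bsub>R\<^esub>"
      using F.bnz[OF a b] by simp
  qed
qed

end
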